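(* For all integers $n\ge1$ and $r\ge1$, \[ \sum_{k=1}^{n}\binom{k-1}{r-1}\omega(n-k)=\sum_{\substack{m+k=n\\ m\ge1,\ k\ge0}}c_\psi(m,r)\,\Omega_m(k). \]
   Context: A composition of $n$ is an ordered sequence $(a_1,\dots,a_r)$ of positive integers with $a_1+\dots+a_r=n$; it is relatively prime if $\gcd(a_1,\dots,a_r)=1$. $c_\psi(n,r)$ is the number of relatively prime compositions of $n$ with exactly $r$ parts. $\omega:\mathbb{Z}\to\mathbb{Z}$ is defined by $\omega(0)=1$; $\omega(m)=(-1)^j$ if $m=\frac{3j^2\pm j}{2}$ for some integer $j\ge1$; $\omega(m)=0$ otherwise (in particular for $m<0$). For $m\ge1$ and integer $k$, $\Omega_m(k)=\sum_{j\ge0}\omega(k-jm)=\omega(k)+\omega(k-m)+\omega(k-2m)+\cdots$. *)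

theory Defs
  imports Main
begin

text \<open>Compositions of n with r parts are lists of positive naturals of length r summing to n;
 relatively prime means the gcd of the parts is 1.\<close>
definition c_psi :: "nat \<Rightarrow> nat \<Rightarrow> nat" where
  "c_psi n r = card {as :: nat list. length as = r \<and> (\<forall>a\<in>set as. 0 < a)
                      \<and> sum_list as = n \<and> Gcd (set as) = 1}"

text \<open>Pentagonal-number sign function.\<close>
definition omega :: "int \<Rightarrow> int" where
  "omega m = (if m = 0 then 1
     else if \<exists>j::nat. 1 \<le> j \<and> (2 * m = 3 * int j ^ 2 + int j \<or> 2 * m = 3 * int j ^ 2 - int j)
     then (-1) ^ (THE j::nat. 1 \<le> j \<and> (2 * m = 3 * int j ^ 2 + int j \<or> 2 * m = 3 * int j ^ 2 - int j))
     else 0)"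

text \<open>Omega_m(k) = sum over j \<ge> 0 of omega(k - j m); only the terms with k - j m \<ge> 0 can be
 nonzero, and for m \<ge> 1 these are finitely many.\<close>
definition Omega :: "nat \<Rightarrow> int \<Rightarrow> int" where
  "Omega m k = (\<Sum>j\<in>{j::nat. int j * int m \<le> k}. omega (k - int j * int m))"

end

theory Submission
  imports Defs
begin

definition comp :: "nat \<Rightarrow> nat \<Rightarrow> nat list set" where
  "comp N r = {as. length as = r \<and> (\<forall>a\<in>set as. 0 < a) \<and> sum_list as = N}"

lemma sum_list_map_Suc: "sum_list (map Suc l) = sum_list l + length l"
  by (induction l) auto

lemma len_le_sum: "\<forall>a\<in>set as. 0 < (a::nat) \<Longrightarrow> length as \<le> sum_list as"
  by (induction as) auto

lemma finite_comp: "finite (comp N r)"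
proof (rule finite_subset)
  show "comp N r \<subseteq> {xs. set xs \<subseteq> {0..N} \<and> length xs = r}"
    unfolding comp_def using member_le_sum_list by fastforce
  show "finite {xs. set xs \<subseteq> {0..N} \<and> length xs = r}"
    by (rule finite_lists_length_eq) simp
qed

lemma card_comp:
  assumes "1 \<le> N" "1 \<le> r"
  shows "card (comp N r) = (N - 1) choose (r - 1)"
proof (cases "r \<le> N")
  case True
  have "bij_betw (map Suc) {l::nat list. size l = r \<and> sum_list l = N - r} (comp N r)"
  proof (rule bij_betw_byWitness[where f' = "map (\<lambda>x. x - 1)"])
    show "\<forall>a\<in>{l::nat list. size l = r \<and> sum_list l = N - r}. map (\<lambda>x. x - 1) (map Suc a) = a"
      by (simp add: map_idI)
    show "\<forall>a'\<in>comp N r. map Suc (map (\<lambda>x. x - 1) a') = a'"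
      unfolding comp_def by (auto intro!: map_idI)
    show "map Suc ` {l::nat list. size l = r \<and> sum_list l = N - r} \<subseteq> comp N r"
      unfolding comp_def using True by (auto simp: sum_list_map_Suc)
    show "map (\<lambda>x. x - 1) ` comp N r \<subseteq> {l::nat list. size l = r \<and> sum_list l = N - r}"
    proof
      fix l assume "l \<in> map (\<lambda>x. x - 1) ` comp N r"
      then obtain a where a: "a \<in> comp N r" "l = map (\<lambda>x. x - 1) a" by auto
      have "map Suc l = a" using a unfolding comp_def by (auto intro!: map_idI)
      then have "sum_list l + length l = N" using a unfolding comp_def
        by (metis (mono_tags, lifting) mem_Collect_eq sum_list_map_Suc)
      then show "l \<in> {l::nat list. size l = r \<and> sum_list l = N - r}"
        using a unfolding comp_def by auto
    qed
  qed
  then have "card (comp N r) = card {l::nat list. size l = r \<and> sum_list l = N - r}"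
    by (metis bij_betw_same_card)
  also have "\<dots> = (N - r + r - 1) choose (N - r)" by (rule card_length_sum_list)
  also have "\<dots> = (N - 1) choose (r - 1)"
  proof -
    have e1: "N - r + r - 1 = N - 1" using True by simp
    have e2: "N - 1 - (r - 1) = N - r" using True assms by simp
    have "(N - 1) choose (r - 1) = (N - 1) choose (N - 1 - (r - 1))"
      using True assms by (intro binomial_symmetric) simp
    then show ?thesis using e1 e2 by simp
  qed
  finally show ?thesis .
next
  case False
  have "comp N r = {}" unfolding comp_def using len_le_sum False by fastforce
  then show ?thesis using False assms by simp
qed


lemma dvd_sum_list_nat: "\<forall>a\<in>set as. (d::nat) dvd a \<Longrightarrow> d dvd sum_list as"
  by (induction as) auto

lemma card_gcd_class:
  assumes "1 \<le> N" "d dvd N"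
  shows "card {as \<in> comp N r. Gcd (set as) = d} = c_psi (N div d) r"
proof -
  have dpos: "d > 0" using assms by (metis dvd_0_left_iff not_gr0 not_one_le_zero)
  let ?S = "{as :: nat list. length as = r \<and> (\<forall>a\<in>set as. 0 < a)
                      \<and> sum_list as = N div d \<and> Gcd (set as) = 1}"
  have "bij_betw (map (\<lambda>x. d * x)) ?S {as \<in> comp N r. Gcd (set as) = d}"
  proof (rule bij_betw_byWitness[where f' = "map (\<lambda>x. x div d)"])
    show "\<forall>a\<in>?S. map (\<lambda>x. x div d) (map (\<lambda>x. d * x) a) = a"
      using dpos by (simp add: map_idI)
    show "\<forall>a'\<in>{as \<in> comp N r. Gcd (set as) = d}. map (\<lambda>x. d * x) (map (\<lambda>x. x div d) a') = a'"
      by (auto intro!: map_idI dest: Gcd_dvd)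
    show "map (\<lambda>x. d * x) ` ?S \<subseteq> {as \<in> comp N r. Gcd (set as) = d}"
    proof
      fix l assume "l \<in> map (\<lambda>x. d * x) ` ?S"
      then obtain b where b: "b \<in> ?S" "l = map (\<lambda>x. d * x) b" by auto
      have "sum_list l = d * sum_list b" using b(2) by (simp add: sum_list_const_mult)
      also have "\<dots> = N" using b(1) assms by simp
      finally have s: "sum_list l = N" .
      have "Gcd (set l) = Gcd ((*) d ` set b)" using b(2) by simp
      also have "\<dots> = d" using b(1) by (simp add: Gcd_mult)
      finally show "l \<in> {as \<in> comp N r. Gcd (set as) = d}"
        using s b dpos unfolding comp_def by auto
    qed
    show "map (\<lambda>x. x div d) ` {as \<in> comp N r. Gcd (set as) = d} \<subseteq> ?S"
    proof
      fix l assume "l \<in> map (\<lambda>x. x div d) ` {as \<in> comp N r. Gcd (set as) = d}"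
      then obtain a where a: "a \<in> comp N r" "Gcd (set a) = d" "l = map (\<lambda>x. x div d) a" by auto
      have dv: "\<forall>x\<in>set a. d dvd x" using a(2) by (auto dest: Gcd_dvd)
      have "map (\<lambda>x. d * x) l = a" using dv unfolding a(3) by (induction a) auto
      then have al: "a = map (\<lambda>x. d * x) l" by simp
      have "N = d * sum_list l" using a(1) al unfolding comp_def by (simp add: sum_list_const_mult)
      then have s: "sum_list l = N div d" using dpos by simp
      have "d = Gcd ((*) d ` set l)" using a(2) al by simp
      also have "\<dots> = d * Gcd (set l)" by (simp add: Gcd_mult)
      finally have g: "Gcd (set l) = 1" using dpos by simp
      have p: "\<forall>x\<in>set l. 0 < x" using a(1) al unfolding comp_def by auto
      show "l \<in> ?S" using s g p a(1) a(3) unfolding comp_def by auto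
    qed
  qed
  then show ?thesis unfolding c_psi_def by (metis (no_types, lifting) bij_betw_same_card)
qed

lemma card_comp_divisors:
  assumes "1 \<le> N" "1 \<le> r"
  shows "card (comp N r) = (\<Sum>m\<in>{m. m dvd N}. c_psi m r)"
proof -
  have fin: "finite {d. d dvd N}" using assms by (simp add: finite_divisors_nat)
  have eq: "comp N r = (\<Union>d\<in>{d. d dvd N}. {as \<in> comp N r. Gcd (set as) = d})"
  proof -
    have "Gcd (set as) dvd N" if "as \<in> comp N r" for as
      using that unfolding comp_def
      by (metis (mono_tags, lifting) Gcd_dvd dvd_sum_list_nat mem_Collect_eq)
    then show ?thesis by auto
  qed
  have "card (comp N r) = (\<Sum>d\<in>{d. d dvd N}. card {as \<in> comp N r. Gcd (set as) = d})"
    by (subst eq, rule card_UN_disjoint) (auto simp: fin finite_comp)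
  also have "\<dots> = (\<Sum>d\<in>{d. d dvd N}. c_psi (N div d) r)"
    using assms by (intro sum.cong refl card_gcd_class) auto
  also have "\<dots> = (\<Sum>m\<in>{m. m dvd N}. c_psi m r)"
  proof -
    have inv: "N div (N div b) = b \<and> N div b dvd N" if "b dvd N" for b
      using that assms by (auto simp: div_div_eq_right dvd_div_eq_0_iff)
    show ?thesis
      by (rule sum.reindex_bij_witness[where i = "\<lambda>d. N div d" and j = "\<lambda>d. N div d"])
        (use inv in auto)
  qed
  finally show ?thesis .
qed


lemma Omega_divisors:
  assumes "1 \<le> m" "m \<le> n"
  shows "Omega m (int n - int m) = (\<Sum>t\<in>{t\<in>{1..n}. m dvd t}. omega (int n - int t))"
  unfolding Omega_def
proof (rule sum.reindex_bij_witness[where j = "\<lambda>k. (k+1)*m" and i = "\<lambda>t. t div m - 1"])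
  fix a assume a: "a \<in> {j::nat. int j * int m \<le> int n - int m}"
  have "int (a * m + m) \<le> int n" using a by simp
  then have le: "(a+1)*m \<le> n" by (simp only: of_nat_le_iff) simp
  show "(a + 1) * m div m - 1 = a" using assms by simp
  show "(a + 1) * m \<in> {t \<in> {1..n}. m dvd t}" using le assms by simp
  show "omega (int n - int ((a + 1) * m)) = omega (int n - int m - int a * int m)"
    by (simp add: algebra_simps)
next
  fix b assume b: "b \<in> {t \<in> {1..n}. m dvd t}"
  then obtain q where q: "b = m * q" by auto
  have "q \<noteq> 0" using b q by auto
  then obtain p where p: "q = Suc p" by (cases q) auto
  have mpos: "m > 0" using assms by simp
  have bd: "b div m = Suc p" using q p mpos by simp
  show "(b div m - 1 + 1) * m = b" using bd q p by simp
  have le: "m + m * p \<le> n" using b q p by simp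
  have "int m + int m * int p \<le> int n" using le by (metis of_nat_add of_nat_le_iff of_nat_mult)
  then have "int p * int m \<le> int n - int m" by (simp add: algebra_simps)
  then show "b div m - 1 \<in> {j. int j * int m \<le> int n - int m}" using bd by simp
qed

theorem mainTheorem11:
  fixes n r :: nat
  assumes "1 \<le> n" and "1 \<le> r"
  shows "(\<Sum>k=1..n. int ((k - 1) choose (r - 1)) * omega (int n - int k))
         = (\<Sum>m=1..n. int (c_psi m r) * Omega m (int n - int m))"
proof -
  have "(\<Sum>m=1..n. int (c_psi m r) * Omega m (int n - int m))
      = (\<Sum>m\<in>{1..n}. int (c_psi m r) * (\<Sum>t\<in>{t\<in>{1..n}. m dvd t}. omega (int n - int t)))"
    by (intro sum.cong refl) (simp add: Omega_divisors)
  also have "\<dots> = (\<Sum>m\<in>{1..n}. \<Sum>t\<in>{t\<in>{1..n}. m dvd t}. int (c_psi m r) * omega (int n - int t))"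
    by (simp add: sum_distrib_left)
  also have "\<dots> = (\<Sum>t\<in>{1..n}. \<Sum>m\<in>{m\<in>{1..n}. m dvd t}. int (c_psi m r) * omega (int n - int t))"
    by (rule sum.swap_restrict) auto
  also have "\<dots> = (\<Sum>t\<in>{1..n}. (\<Sum>m\<in>{m. m dvd t}. int (c_psi m r)) * omega (int n - int t))"
  proof (intro sum.cong refl)
    fix t assume t: "t \<in> {1..n}"
    have "{m\<in>{1..n}. m dvd t} = {m. m dvd t}"
    proof (rule set_eqI)
      fix m
      show "m \<in> {m\<in>{1..n}. m dvd t} \<longleftrightarrow> m \<in> {m. m dvd t}"
      proof
        assume "m \<in> {m. m dvd t}"
        then have d: "m dvd t" by simp
        have t0: "0 < t" using t by simp
        have "0 < m" using dvd_pos_nat[OF t0 d] .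
        moreover have "m \<le> t" using dvd_imp_le[OF d t0] .
        ultimately show "m \<in> {m\<in>{1..n}. m dvd t}" using d t by simp
      qed simp
    qed
    then show "(\<Sum>m\<in>{m\<in>{1..n}. m dvd t}. int (c_psi m r) * omega (int n - int t))
        = (\<Sum>m\<in>{m. m dvd t}. int (c_psi m r)) * omega (int n - int t)"
      by (simp add: sum_distrib_right)
  qed
  also have "\<dots> = (\<Sum>k=1..n. int ((k - 1) choose (r - 1)) * omega (int n - int k))"
  proof (intro sum.cong refl)
    fix t assume t: "t \<in> {1..n}"
    have "(\<Sum>m\<in>{m. m dvd t}. int (c_psi m r)) = int (\<Sum>m\<in>{m. m dvd t}. c_psi m r)" by simp
    also have "\<dots> = int (card (comp t r))" using t assms by (simp add: card_comp_divisors)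
    also have "\<dots> = int ((t - 1) choose (r - 1))" using t assms by (simp add: card_comp)
    finally show "(\<Sum>m\<in>{m. m dvd t}. int (c_psi m r)) * omega (int n - int t)
        = int ((t - 1) choose (r - 1)) * omega (int n - int t)" by simp
  qed
  finally show ?thesis by simp
qed

end
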